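(* Let $0<i_1<i_2<\cdots<i_L$ be integers, $\mathcal S=\{x_0,x_{i_1},\ldots,x_{i_L}\}$, and let $d_{RRA}^{\mathcal S}$ be the corresponding restricted right-arm rotation distance. Let $T_1,T_2$ be finite rooted binary trees each with $n$ nodes, $n\ge3$, such that $d_{RRA}^{\mathcal S}(T_1,T_2)$ is defined. Then $d_{RRA}^{\mathcal S}(T_1,T_2)\le 4n-8$.
   Context: Trees: finite rooted binary trees, each internal vertex (node) having a left and a right child. The right arm consists of the root and all nodes reachable from the root by a path of right edges; the level of a node is its distance (number of edges) from the root. Right rotation at a node $N$ whose left child $M$ is a node (with $A,B$ the left and right subtrees of $M$, $C$ the right subtree of $N$) replaces the subtree at $N$ by one whose root has left subtree $A$ and whose right child is a node with left subtree $B$ and right subtree $C$; left rotation at $N$ is the inverse operation. Rotations do not change the number of nodes. For $\mathcal S=\{x_0,x_{i_1},\ldots,x_{i_L}\}$, $d_{RRA}^{\mathcal S}(T_1,T_2)$ is the minimal number of rotations, each performed at a node on the right arm at one of the levels $0,i_1,\ldots,i_L$, required to transform $T_1$ into $T_2$; it is defined when such a sequence of rotations exists. *)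

theory Defs
  imports Main
begin

datatype tree = Leaf | Node tree tree

fun nodes :: "tree \<Rightarrow> nat" where
  "nodes Leaf = 0"
| "nodes (Node l r) = Suc (nodes l + nodes r)"

fun rotR :: "tree \<Rightarrow> tree option" where
  "rotR (Node (Node A B) C) = Some (Node A (Node B C))"
| "rotR _ = None"

fun rotL :: "tree \<Rightarrow> tree option" where
  "rotL (Node A (Node B C)) = Some (Node (Node A B) C)"
| "rotL _ = None"

fun at_arm :: "nat \<Rightarrow> (tree \<Rightarrow> tree option) \<Rightarrow> tree \<Rightarrow> tree option" where
  "at_arm 0 f t = f t"
| "at_arm (Suc k) f Leaf = None"
| "at_arm (Suc k) f (Node l r) = map_option (Node l) (at_arm k f r)"

definition rra_step :: "nat set \<Rightarrow> tree \<Rightarrow> tree \<Rightarrow> bool" where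
  "rra_step Ls T T' \<longleftrightarrow>
     (\<exists>k\<in>Ls. at_arm k rotR T = Some T' \<or> at_arm k rotL T = Some T')"

text \<open>d_RRA^S(T1,T2) is defined iff T2 is reachable from T1.\<close>
definition rra_defined :: "nat set \<Rightarrow> tree \<Rightarrow> tree \<Rightarrow> bool" where
  "rra_defined Ls T1 T2 \<longleftrightarrow> (\<exists>m. (rra_step Ls ^^ m) T1 T2)"

definition d_RRA :: "nat set \<Rightarrow> tree \<Rightarrow> tree \<Rightarrow> nat" where
  "d_RRA Ls T1 T2 = (LEAST m. (rra_step Ls ^^ m) T1 T2)"

end

theory Submission
  imports Defs
begin

fun spine :: "tree \<Rightarrow> tree list" where
  "spine Leaf = []"
| "spine (Node l r) = l # spine r"

definition unsp :: "tree list \<Rightarrow> tree" where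
  "unsp xs = foldr Node xs Leaf"

lemma unsp_simps[simp]: "unsp [] = Leaf" "unsp (x # xs) = Node x (unsp xs)"
  by (simp_all add: unsp_def)

lemma unsp_spine[simp]: "unsp (spine t) = t"
  by (induction t) auto

fun lad :: "tree \<Rightarrow> tree list" where
  "lad Leaf = []"
| "lad (Node l r) = lad l @ [r]"

fun sq :: "tree \<Rightarrow> tree list" where
  "sq Leaf = []"
| "sq (Node a r) = lad a @ spine r"

definition fnodes :: "tree list \<Rightarrow> nat" where
  "fnodes xs = sum_list (map nodes xs)"

lemma fnodes_simps[simp]: "fnodes [] = 0" "fnodes (x # xs) = nodes x + fnodes xs"
  "fnodes (xs @ ys) = fnodes xs + fnodes ys"
  by (simp_all add: fnodes_def)

lemma fnodes_rep[simp]: "fnodes (replicate m Leaf) = 0"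
  by (induction m) auto

lemma nodes_unsp: "nodes (unsp xs) = length xs + fnodes xs"
  by (induction xs) auto

lemma nodes_lad: "nodes a = length (lad a) + fnodes (lad a)"
  by (induction a) auto

fun mrg :: "tree list \<Rightarrow> tree list" where
  "mrg (a # b # xs) = Node a b # xs"
| "mrg xs = xs"

lemma at_arm_split:
  "at_arm (length pre) rotR (unsp (pre @ Node B C # post)) = Some (unsp (pre @ B # C # post))"
  by (induction pre) auto

lemma at_arm_decomp:
  "at_arm j f T = Some T' \<Longrightarrow> \<exists>pre s s'. length pre = j \<and> T = foldr Node pre s \<and> T' = foldr Node pre s' \<and> f s = Some s'"
proof (induction j arbitrary: T T')
  case 0
  then show ?case by auto
next
  case (Suc j)
  then obtain l r where T: "T = Node l r" by (cases T) auto
  with Suc.prems obtain r' where r': "at_arm j f r = Some r'" and T': "T' = Node l r'" by auto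
  from Suc.IH[OF r'] obtain pre s s' where "length pre = j" "r = foldr Node pre s" "r' = foldr Node pre s'" "f s = Some s'"
    by blast
  then show ?case using T T' by (intro exI[of _ "l # pre"]) auto
qed

lemma spine_foldr: "spine (foldr Node pre s) = pre @ spine s"
  by (induction pre) auto

lemma rot_inv:
  "at_arm k rotR T = Some T' \<Longrightarrow> at_arm k rotL T' = Some T"
  "at_arm k rotL T = Some T' \<Longrightarrow> at_arm k rotR T' = Some T"
proof (induction k arbitrary: T T')
  case 0
  { case 1 then show ?case
      by (cases T rule: rotR.cases) auto }
  { case 2 then show ?case
      by (cases T rule: rotL.cases) auto }
next
  case (Suc k)
  { case 1 then show ?case using Suc.IH(1) by (cases T) auto }
  { case 2 then show ?case using Suc.IH(2) by (cases T) auto }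
qed

lemma step_sym: "rra_step Ls T T' \<Longrightarrow> rra_step Ls T' T"
  unfolding rra_step_def using rot_inv by blast

lemma relpow_sym: "(rra_step Ls ^^ m) T T' \<Longrightarrow> (rra_step Ls ^^ m) T' T"
proof (induction m arbitrary: T')
  case 0 then show ?case by simp
next
  case (Suc m)
  then obtain U where "(rra_step Ls ^^ m) T U" "rra_step Ls U T'" by auto
  then show ?case using Suc.IH step_sym relpowp_Suc_I2 by metis
qed

definition wkey :: "nat \<Rightarrow> tree \<Rightarrow> tree list" where
  "wkey k T = take (k - 1) (sq T)"

lemma root_sq:
  "rotR T = Some T' \<Longrightarrow> sq T' = sq T"
  "rotL T = Some T' \<Longrightarrow> sq T' = sq T"
  by (cases T rule: rotR.cases; auto) (cases T rule: rotL.cases; auto)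

lemma step_wf:
  assumes "rra_step Ls T T'" "\<forall>j\<in>Ls. j = 0 \<or> k \<le> j" "1 \<le> k"
  shows "wkey k T' = wkey k T"
proof -
  from assms(1) obtain j f where j: "j \<in> Ls" "f = rotR \<or> f = rotL" "at_arm j f T = Some T'"
    unfolding rra_step_def by blast
  show ?thesis
  proof (cases "j = 0")
    case True
    then show ?thesis using j root_sq unfolding wkey_def by auto
  next
    case False
    then have "k \<le> j" using assms(2) j(1) by auto
    from at_arm_decomp[OF j(3)] obtain pre s s' where
      p: "length pre = j" "T = foldr Node pre s" "T' = foldr Node pre s'" by blast
    from False p(1) obtain a pre' where pre: "pre = a # pre'" by (cases pre) auto
    have "sq T = lad a @ pre' @ spine s" "sq T' = lad a @ pre' @ spine s'"
      using p pre by (auto simp: spine_foldr)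
    moreover have "k - 1 \<le> length (lad a @ pre')" using p pre \<open>k \<le> j\<close> by auto
    moreover have "take (k - 1) ((lad a @ pre') @ zs) = take (k - 1) (lad a @ pre')" for zs
      using \<open>k - 1 \<le> length (lad a @ pre')\<close> by simp
    ultimately show ?thesis unfolding wkey_def by (metis append_assoc)
  qed
qed

lemma path_wf:
  assumes "(rra_step Ls ^^ m) T T'" "\<forall>j\<in>Ls. j = 0 \<or> k \<le> j" "1 \<le> k"
  shows "wkey k T' = wkey k T"
  using assms(1)
proof (induction m arbitrary: T')
  case 0 then show ?case by simp
next
  case (Suc m)
  then obtain U where "(rra_step Ls ^^ m) T U" "rra_step Ls U T'" by auto
  then show ?case using Suc.IH step_wf[OF _ assms(2,3)] by metis
qed

lemma phase1:
  assumes "0 \<in> Ls"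
  shows "(rra_step Ls ^^ length (lad a)) (unsp (a # ys)) (unsp (Leaf # lad a @ ys))"
proof (induction a arbitrary: ys)
  case Leaf then show ?case by simp
next
  case (Node l r)
  have "rra_step Ls (unsp (Node l r # ys)) (unsp (l # r # ys))"
    unfolding rra_step_def using assms by (intro bexI[of _ 0]) auto
  moreover have "(rra_step Ls ^^ length (lad l)) (unsp (l # r # ys)) (unsp (Leaf # lad (Node l r) @ ys))"
    using Node.IH[of "r # ys"] by simp
  ultimately show ?case using relpowp_Suc_I2 by fastforce
qed

definition mu :: "tree list \<Rightarrow> nat" where
  "mu xs = 2 * fnodes xs + length xs"

definition MM :: "tree list \<Rightarrow> nat" where
  "MM xs = length xs + fnodes xs"

lemma phase2:
  assumes "0 \<in> Ls" "k \<in> Ls" "1 \<le> k"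
  shows "length front = k - 1 \<or> tail = [] \<Longrightarrow>
    (rra_step Ls ^^ (mu tail - min 2 (MM tail))) (unsp (y0 # front @ tail))
      (unsp ((mrg ^^ (MM tail - min 2 (MM tail))) (y0 # front @ replicate (MM tail) Leaf)))"
proof (induction "mu tail" arbitrary: y0 front tail rule: less_induct)
  case less
  show ?case
  proof (cases tail)
    case Nil
    then show ?thesis by (simp add: mu_def MM_def)
  next
    case (Cons t rest)
    then have lf: "length front = k - 1" using less.prems by auto
    show ?thesis
    proof (cases t)
      case (Node B C)
      let ?tail' = "B # C # rest"
      have st: "rra_step Ls (unsp (y0 # front @ tail)) (unsp (y0 # front @ ?tail'))"
        unfolding rra_step_def using assms lf at_arm_split[of "y0 # front" B C rest] Cons Node
        by (intro bexI[of _ k]) auto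
      have mu': "mu ?tail' < mu tail" "mu tail = Suc (mu ?tail')" "MM ?tail' = MM tail"
        using Cons Node by (auto simp: mu_def MM_def)
      have ih: "(rra_step Ls ^^ (mu ?tail' - min 2 (MM ?tail'))) (unsp (y0 # front @ ?tail'))
         (unsp ((mrg ^^ (MM ?tail' - min 2 (MM ?tail'))) (y0 # front @ replicate (MM ?tail') Leaf)))"
        using less.hyps[OF mu'(1)] lf by blast
      have "mu ?tail' \<ge> min 2 (MM ?tail')" by (auto simp: mu_def MM_def)
      then have "mu tail - min 2 (MM tail) = Suc (mu ?tail' - min 2 (MM ?tail'))"
        using mu' by simp
      then show ?thesis using relpowp_Suc_I2[OF st ih] mu'(3) by simp
    next
      case Leaf
      note tL = Leaf
      show ?thesis
      proof (cases "2 \<le> length rest \<or> (\<exists>x. rest = [x] \<and> x \<noteq> Leaf)")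
        case True
        define h where "h = hd (front @ [Leaf])"
        define front' where "front' = tl (front @ [Leaf])"
        have fe: "front @ [Leaf] = h # front'" unfolding h_def front'_def by (cases front) auto
        have lf': "length front' = k - 1" using lf unfolding front'_def by simp
        have eq1: "y0 # front @ tail = y0 # h # front' @ rest"
          using fe Cons Leaf by (metis append.assoc append_Cons append_Nil)
        have st: "rra_step Ls (unsp (y0 # front @ tail)) (unsp (Node y0 h # front' @ rest))"
          unfolding rra_step_def using assms eq1 by (intro bexI[of _ 0]) auto
        have M3: "MM tail \<ge> 3" using True Cons Leaf
          by (auto simp: MM_def) (case_tac x; simp)
        have mu': "mu rest < mu tail" "mu tail = Suc (mu rest)" "MM rest = MM tail - 1"
          using Cons Leaf by (auto simp: mu_def MM_def)
        have ih: "(rra_step Ls ^^ (mu rest - min 2 (MM rest))) (unsp (Node y0 h # front' @ rest))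
           (unsp ((mrg ^^ (MM rest - min 2 (MM rest))) (Node y0 h # front' @ replicate (MM rest) Leaf)))"
          using less.hyps[OF mu'(1)] lf' by blast
        have "mu rest \<ge> MM rest" by (auto simp: mu_def MM_def)
        then have c1: "mu tail - min 2 (MM tail) = Suc (mu rest - min 2 (MM rest))"
          using mu' M3 by simp
        have c2: "MM tail - min 2 (MM tail) = Suc (MM rest - min 2 (MM rest))"
          using mu' M3 by simp
        have "y0 # front @ replicate (MM tail) Leaf = y0 # h # front' @ replicate (MM rest) Leaf"
          using fe M3 mu'(3)
          by (metis Suc_diff_1 append.assoc append_Cons append_Nil dual_order.strict_trans1 replicate_Suc zero_less_numeral)
        then have "mrg (y0 # front @ replicate (MM tail) Leaf) = Node y0 h # front' @ replicate (MM rest) Leaf"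
          by simp
        then have "(mrg ^^ (MM tail - min 2 (MM tail))) (y0 # front @ replicate (MM tail) Leaf)
            = (mrg ^^ (MM rest - min 2 (MM rest))) (Node y0 h # front' @ replicate (MM rest) Leaf)"
          unfolding c2 funpow_Suc_right comp_def by simp
        then show ?thesis using relpowp_Suc_I2[OF st ih] c1 by simp
      next
        case False
        then have "rest = [] \<or> rest = [Leaf]" by (cases rest) (auto simp: numeral_2_eq_2 Suc_le_eq)
        then show ?thesis using Cons Leaf by (auto simp: mu_def MM_def)
      qed
    qed
  qed
qed


definition XX :: "nat \<Rightarrow> nat \<Rightarrow> tree list \<Rightarrow> tree" where
  "XX k n w = (let M = n - 1 - length w - fnodes w in
     unsp ((mrg ^^ (M - min 2 M)) (Leaf # w @ replicate M Leaf)))"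

lemma reach:
  assumes "0 \<in> Ls" "k \<in> Ls" "1 \<le> k" "nodes T = n" "3 \<le> n"
  shows "\<exists>m. m \<le> 2 * n - 4 \<and> (rra_step Ls ^^ m) T (XX k n (wkey k T))"
proof -
  obtain a r where T: "T = Node a r" using assms(4,5) by (cases T) auto
  define as where "as = spine r"
  define D where "D = lad a @ as"
  have sqT: "sq T = D" using T D_def as_def by simp
  have Tu: "T = unsp (a # as)" using T as_def by simp
  define w where "w = take (k - 1) D"
  define tail where "tail = drop (k - 1) D"
  have Dwt: "D = w @ tail" using w_def tail_def by simp
  have lw: "length w = k - 1 \<or> tail = []" using w_def tail_def by auto
  have p1: "(rra_step Ls ^^ length (lad a)) T (unsp (Leaf # w @ tail))"
    using phase1[OF assms(1), of a as] Tu Dwt D_def by simp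
  have p2: "(rra_step Ls ^^ (mu tail - min 2 (MM tail))) (unsp (Leaf # w @ tail))
      (unsp ((mrg ^^ (MM tail - min 2 (MM tail))) (Leaf # w @ replicate (MM tail) Leaf)))"
    using phase2[OF assms(1,2,3) lw] by blast
  have nT: "n = 1 + length D + fnodes D"
    using assms(4) T nodes_lad[of a] nodes_unsp[of as] as_def D_def by simp
  have MMt: "MM tail = n - 1 - length w - fnodes w"
    using nT Dwt by (simp add: MM_def)
  have X: "XX k n (wkey k T) = unsp ((mrg ^^ (MM tail - min 2 (MM tail))) (Leaf # w @ replicate (MM tail) Leaf))"
    unfolding XX_def wkey_def sqT w_def[symmetric] using MMt by (simp add: Let_def)
  have path: "(rra_step Ls ^^ (length (lad a) + (mu tail - min 2 (MM tail)))) T (XX k n (wkey k T))"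
    using p1 p2 X relpowp_add by (metis relcomppI)
  have la: "length (lad a) \<le> length D" using D_def by simp
  have "length (lad a) + (mu tail - min 2 (MM tail)) \<le> 2 * n - 4"
    using la nT Dwt assms(5) by (simp add: mu_def MM_def)
  with path show ?thesis by blast
qed

theorem proposition3p8:
  fixes idx :: "nat list" and T1 T2 :: tree and n :: nat
  assumes "idx \<noteq> []"
    and "sorted_wrt (<) idx"
    and "0 < hd idx"
    and "nodes T1 = n" and "nodes T2 = n" and "n \<ge> 3"
    and "rra_defined (insert 0 (set idx)) T1 T2"
  shows "d_RRA (insert 0 (set idx)) T1 T2 \<le> 4 * n - 8"
proof -
  define k where "k = hd idx"
  define Ls where "Ls = insert 0 (set idx)"
  obtain h t where idx: "idx = h # t" using assms(1) by (cases idx) auto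
  have hLs: "\<forall>j\<in>Ls. j = 0 \<or> k \<le> j"
    using assms(2) idx unfolding Ls_def k_def by auto
  have k1: "1 \<le> k" using assms(3) k_def by simp
  have kL: "k \<in> Ls" "0 \<in> Ls" using idx k_def Ls_def by auto
  from assms(7) obtain m0 where m0: "(rra_step Ls ^^ m0) T1 T2"
    unfolding rra_defined_def Ls_def by blast
  have weq: "wkey k T2 = wkey k T1" using path_wf[OF m0 hLs k1] .
  obtain m1 where m1: "m1 \<le> 2 * n - 4" "(rra_step Ls ^^ m1) T1 (XX k n (wkey k T1))"
    using reach[OF kL(2) kL(1) k1 assms(4,6)] by blast
  obtain m2 where m2: "m2 \<le> 2 * n - 4" "(rra_step Ls ^^ m2) T2 (XX k n (wkey k T1))"
    using reach[OF kL(2) kL(1) k1 assms(5,6)] weq by auto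
  have "(rra_step Ls ^^ (m1 + m2)) T1 T2"
    using m1(2) relpow_sym[OF m2(2)] relpowp_add by (metis relcomppI)
  then have "d_RRA Ls T1 T2 \<le> m1 + m2"
    unfolding d_RRA_def by (rule Least_le)
  also have "\<dots> \<le> 4 * n - 8" using m1(1) m2(1) assms(6) by linarith
  finally show ?thesis unfolding Ls_def .
qed

end
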